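(* Suppose that $X\subset U\subset\mathbb{R}^n$, where $U$ is open and $X$ is the closure in $U$ of its interior. Then $\tau^p(X)=X\times\mathcal{P}_p^*$ for all $p\in\mathbb{N}$.
   Context: $\mathcal{P}_p$: real polynomials on $\mathbb{R}^n$ of degree $\le p$; $\mathcal{P}_p^*$ its dual; $r=\dim\mathcal{P}_p$. For $\xi\in\mathcal{P}_p^*$, $b\in\mathbb{R}^n$, $|\alpha|\le p$: $\xi_\alpha(b):=\xi(\tfrac1{\alpha!}(x-b)^\alpha)$; $\delta_a(P)=P(a)$. A bundle over $X$ with fibres in $W$ is a subset of $X\times W$ whose fibres are linear subspaces. For a bundle $E\subset X\times\mathcal{P}_p^*$: $\Delta E=\{(a,b,\xi+\eta):a,b\in X,\xi\in E_a,\eta\in E_b,|a-b|^{p-|\alpha|}|\eta_\alpha(b)|\le1\ \forall|\alpha|\le p\}$, $E'=\{(a,\xi):(a,a,\xi)\in\overline{\Delta E}\}$ (closure in $X\times X\times\mathcal{P}_p^*$), $\rho(E)=\{(a,\xi):\xi\in\operatorname{Span}E'_a\}$. With $E_0=\{(a,\lambda\delta_a):a\in X,\lambda\in\mathbb{R}\}$, the bundles $\rho^i(E_0)$ coincide for $i\ge2r$, and $\tau^p(X):=\rho^{2r}(E_0)$. *)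

theory Defs
  imports "HOL-Analysis.Analysis"
begin

text \<open>An element of the dual P_p^* is represented
by a functional on functions real^'n \<Rightarrow> real that is linear on P_p and
vanishes (canonically) outside P_p.\<close>

definition mabs :: "('n::finite \<Rightarrow> nat) \<Rightarrow> nat" where
  "mabs \<alpha> = (\<Sum>i\<in>UNIV. \<alpha> i)"

definition mfact :: "('n::finite \<Rightarrow> nat) \<Rightarrow> real" where
  "mfact \<alpha> = (\<Prod>i\<in>UNIV. fact (\<alpha> i))"

definition mpow :: "real^'n::finite \<Rightarrow> ('n \<Rightarrow> nat) \<Rightarrow> real" where
  "mpow x \<alpha> = (\<Prod>i\<in>UNIV. (x $ i) ^ (\<alpha> i))"

definition mindex :: "nat \<Rightarrow> ('n::finite \<Rightarrow> nat) set" where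
  "mindex p = {\<alpha>. mabs \<alpha> \<le> p}"

definition Poly :: "nat \<Rightarrow> (real^'n::finite \<Rightarrow> real) set" where
  "Poly p = {P. \<exists>c. P = (\<lambda>x. \<Sum>\<alpha>\<in>mindex p. c \<alpha> * mpow x \<alpha>)}"

definition Pdual :: "nat \<Rightarrow> ((real^'n::finite \<Rightarrow> real) \<Rightarrow> real) set" where
  "Pdual p = {\<xi>. (\<forall>P\<in>Poly p. \<forall>Q\<in>Poly p. \<xi> (\<lambda>x. P x + Q x) = \<xi> P + \<xi> Q)
                 \<and> (\<forall>P\<in>Poly p. \<forall>c. \<xi> (\<lambda>x. c * P x) = c * \<xi> P)
                 \<and> (\<forall>f. f \<notin> Poly p \<longrightarrow> \<xi> f = 0)}"

definition rdim :: "nat \<Rightarrow> 'n::finite itself \<Rightarrow> nat" where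
  "rdim p _ = card (mindex p :: ('n \<Rightarrow> nat) set)"

definition xi_at :: "((real^'n::finite \<Rightarrow> real) \<Rightarrow> real) \<Rightarrow> ('n \<Rightarrow> nat) \<Rightarrow> real^'n \<Rightarrow> real" where
  "xi_at \<xi> \<alpha> b = \<xi> (\<lambda>x. mpow (x - b) \<alpha> / mfact \<alpha>)"

definition delta :: "nat \<Rightarrow> real^'n::finite \<Rightarrow> (real^'n \<Rightarrow> real) \<Rightarrow> real" where
  "delta p a = (\<lambda>P. if P \<in> Poly p then P a else 0)"

definition fsum :: "((real^'n::finite \<Rightarrow> real) \<Rightarrow> real) \<Rightarrow> ((real^'n \<Rightarrow> real) \<Rightarrow> real) \<Rightarrow> (real^'n \<Rightarrow> real) \<Rightarrow> real" where
  "fsum \<xi> \<eta> = (\<lambda>f. \<xi> f + \<eta> f)"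

definition fspan :: "((real^'n::finite \<Rightarrow> real) \<Rightarrow> real) set \<Rightarrow> ((real^'n \<Rightarrow> real) \<Rightarrow> real) set" where
  "fspan S = {v. \<exists>F c. finite F \<and> F \<subseteq> S \<and> v = (\<lambda>f. \<Sum>\<eta>\<in>F. c \<eta> * \<eta> f)}"

definition DeltaB :: "nat \<Rightarrow> (real^'n::finite) set \<Rightarrow> ((real^'n) \<times> ((real^'n \<Rightarrow> real) \<Rightarrow> real)) set
    \<Rightarrow> ((real^'n) \<times> (real^'n) \<times> ((real^'n \<Rightarrow> real) \<Rightarrow> real)) set" where
  "DeltaB p X E = {(a, b, \<zeta>). a \<in> X \<and> b \<in> X \<and> (\<exists>\<xi> \<eta>. (a, \<xi>) \<in> E \<and> (b, \<eta>) \<in> E \<and> \<zeta> = fsum \<xi> \<eta> \<and>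
      (\<forall>\<alpha>\<in>mindex p. dist a b ^ (p - mabs \<alpha>) * \<bar>xi_at \<eta> \<alpha> b\<bar> \<le> 1))}"

text \<open>The closure is taken in X \<times> X \<times> P_p^*, i.e. the closure in the
ambient space (product topology; on P_p^* the topology of pointwise convergence
on P_p, which is the usual topology of the finite-dimensional space) intersected
with X \<times> X \<times> P_p^*.\<close>
definition Eprime :: "nat \<Rightarrow> (real^'n::finite) set \<Rightarrow> ((real^'n) \<times> ((real^'n \<Rightarrow> real) \<Rightarrow> real)) set
    \<Rightarrow> ((real^'n) \<times> ((real^'n \<Rightarrow> real) \<Rightarrow> real)) set" where
  "Eprime p X E = {(a, \<xi>). a \<in> X \<and> \<xi> \<in> Pdual p \<and> (a, a, \<xi>) \<in> closure (DeltaB p X E)}"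

definition rho :: "nat \<Rightarrow> (real^'n::finite) set \<Rightarrow> ((real^'n) \<times> ((real^'n \<Rightarrow> real) \<Rightarrow> real)) set
    \<Rightarrow> ((real^'n) \<times> ((real^'n \<Rightarrow> real) \<Rightarrow> real)) set" where
  "rho p X E = {(a, \<xi>). a \<in> X \<and> \<xi> \<in> fspan {\<eta>. (a, \<eta>) \<in> Eprime p X E}}"

definition E0 :: "nat \<Rightarrow> (real^'n::finite) set \<Rightarrow> ((real^'n) \<times> ((real^'n \<Rightarrow> real) \<Rightarrow> real)) set" where
  "E0 p X = {(a, \<xi>). a \<in> X \<and> (\<exists>t::real. \<xi> = (\<lambda>P. t * delta p a P))}"

definition tau :: "nat \<Rightarrow> (real^'n::finite) set \<Rightarrow> ((real^'n) \<times> ((real^'n \<Rightarrow> real) \<Rightarrow> real)) set" where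
  "tau p X = (rho p X ^^ (2 * rdim p TYPE('n))) (E0 p X)"

end

theory Submission
  imports Defs
begin

definition Tm :: "real^'n::finite \<Rightarrow> ('n \<Rightarrow> nat) \<Rightarrow> real^'n \<Rightarrow> real" where
  "Tm b g = (\<lambda>x. mpow (x - b) g)"

definition Kc :: "('n::finite \<Rightarrow> nat) \<Rightarrow> ('n \<Rightarrow> nat) \<Rightarrow> real^'n \<Rightarrow> real" where
  "Kc a g c = (\<Prod>i\<in>UNIV. of_nat (a i choose g i) * (c $ i) ^ (a i - g i))"

lemma mindex_le: "a \<in> mindex p \<Longrightarrow> a i \<le> p"
proof -
  assume "a \<in> mindex p"
  then have "mabs a \<le> p" by (simp add: mindex_def)
  moreover have "a i \<le> mabs a" unfolding mabs_def by (rule member_le_sum) auto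
  ultimately show ?thesis by simp
qed

lemma finite_mindex: "finite (mindex p :: ('n::finite \<Rightarrow> nat) set)"
proof -
  have "mindex p \<subseteq> PiE (UNIV::'n set) (\<lambda>_. {..p})"
    using mindex_le by (auto simp: PiE_def extensional_def)
  moreover have "finite (PiE (UNIV::'n set) (\<lambda>_. {..p}))" by (rule finite_PiE) auto
  ultimately show ?thesis by (rule finite_subset)
qed

lemma expand:
  fixes x c :: "real^'n::finite"
  assumes "a \<in> mindex p"
  shows "mpow (x + c) a = (\<Sum>g\<in>mindex p. Kc a g c * mpow x g)"
proof -
  have "mpow (x + c) a = (\<Prod>i\<in>UNIV. \<Sum>k\<in>{..a i}. of_nat (a i choose k) * (x$i)^k * (c$i)^(a i - k))"
    unfolding mpow_def by (simp add: binomial_ring)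
  also have "\<dots> = (\<Sum>g\<in>PiE UNIV (\<lambda>i. {..a i}). \<Prod>i\<in>UNIV. of_nat (a i choose g i) * (x$i)^(g i) * (c$i)^(a i - g i))"
    by (rule prod_sum_PiE) auto
  also have "\<dots> = (\<Sum>g\<in>PiE UNIV (\<lambda>i. {..a i}). Kc a g c * mpow x g)"
    unfolding Kc_def mpow_def by (intro sum.cong refl) (simp add: prod.distrib[symmetric] mult_ac)
  also have "\<dots> = (\<Sum>g\<in>mindex p. Kc a g c * mpow x g)"
  proof (rule sum.mono_neutral_left)
    show "finite (mindex p :: ('n \<Rightarrow> nat) set)" by (rule finite_mindex)
    show "PiE UNIV (\<lambda>i. {..a i}) \<subseteq> mindex p"
    proof
      fix g assume "g \<in> PiE (UNIV::'n set) (\<lambda>i. {..a i})"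
      then have "\<forall>i. g i \<le> a i" by (auto simp: PiE_def Pi_def)
      then have "mabs g \<le> mabs a" unfolding mabs_def by (intro sum_mono) auto
      with assms show "g \<in> mindex p" by (simp add: mindex_def)
    qed
    show "\<forall>g\<in>mindex p - PiE UNIV (\<lambda>i. {..a i}). Kc a g c * mpow x g = 0"
    proof
      fix g assume "g \<in> mindex p - PiE (UNIV::'n set) (\<lambda>i. {..a i})"
      then obtain i where "g i > a i" by (auto simp: PiE_def Pi_def extensional_def not_le)
      then have "Kc a g c = 0" unfolding Kc_def by (intro prod_zero) auto
      then show "Kc a g c * mpow x g = 0" by simp
    qed
  qed
  finally show ?thesis .
qed

lemma Poly_zero: "(\<lambda>x. 0) \<in> Poly p"
  unfolding Poly_def by (auto intro!: exI[of _ "\<lambda>_. 0"])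

lemma Poly_add: "P \<in> Poly p \<Longrightarrow> Q \<in> Poly p \<Longrightarrow> (\<lambda>x. P x + Q x) \<in> Poly p"
  unfolding Poly_def
  apply clarify
  subgoal for c d by (rule exI[of _ "\<lambda>a. c a + d a"]) (simp add: sum.distrib distrib_right)
  done

lemma Poly_scale: "P \<in> Poly p \<Longrightarrow> (\<lambda>x. t * P x) \<in> Poly p"
  unfolding Poly_def
  apply clarify
  subgoal for c by (rule exI[of _ "\<lambda>a. t * c a"]) (simp add: sum_distrib_left mult_ac)
  done

lemma Poly_sum: "finite I \<Longrightarrow> (\<forall>i\<in>I. P i \<in> Poly p) \<Longrightarrow> (\<lambda>x. \<Sum>i\<in>I. d i * P i x) \<in> Poly p"
proof (induction I rule: finite_induct)
  case empty then show ?case by (simp add: Poly_zero)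
next
  case (insert j I)
  then have "(\<lambda>x. d j * P j x + (\<Sum>i\<in>I. d i * P i x)) \<in> Poly p"
    by (intro Poly_add Poly_scale) auto
  with insert show ?case by simp
qed

lemma Tm_Poly: "g \<in> mindex p \<Longrightarrow> Tm b g \<in> Poly p"
proof -
  assume g: "g \<in> mindex p"
  have "Tm b g = (\<lambda>x. \<Sum>d\<in>mindex p. Kc g d (-b) * mpow x d)"
    unfolding Tm_def using expand[OF g, of _ "-b"] by (simp add: fun_eq_iff)
  then show ?thesis unfolding Poly_def by (auto intro!: exI[of _ "\<lambda>d. Kc g d (-b)"])
qed

lemma Poly_rep:
  assumes "f \<in> Poly p"
  shows "\<exists>d. f = (\<lambda>x. \<Sum>g\<in>mindex p. d g * Tm b g x)"
proof -
  obtain c where c: "f = (\<lambda>x. \<Sum>a\<in>mindex p. c a * mpow x a)" using assms unfolding Poly_def by blast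
  have "f x = (\<Sum>g\<in>mindex p. (\<Sum>a\<in>mindex p. c a * Kc a g b) * Tm b g x)" for x
  proof -
    have "f x = (\<Sum>a\<in>mindex p. c a * mpow ((x - b) + b) a)" using c by simp
    also have "\<dots> = (\<Sum>a\<in>mindex p. c a * (\<Sum>g\<in>mindex p. Kc a g b * Tm b g x))"
      using expand[of _ p "x - b" b] by (intro sum.cong refl) (simp add: Tm_def)
    also have "\<dots> = (\<Sum>a\<in>mindex p. \<Sum>g\<in>mindex p. c a * Kc a g b * Tm b g x)"
      by (simp add: sum_distrib_left mult_ac)
    also have "\<dots> = (\<Sum>g\<in>mindex p. \<Sum>a\<in>mindex p. c a * Kc a g b * Tm b g x)"
      by (rule sum.swap)
    also have "\<dots> = (\<Sum>g\<in>mindex p. (\<Sum>a\<in>mindex p. c a * Kc a g b) * Tm b g x)"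
      by (simp add: sum_distrib_right)
    finally show ?thesis .
  qed
  then show ?thesis by (intro exI[of _ "\<lambda>g. \<Sum>a\<in>mindex p. c a * Kc a g b"]) (simp add: fun_eq_iff)
qed

lemma Pdual_zero_fun: "\<xi> \<in> Pdual p \<Longrightarrow> \<xi> (\<lambda>x. 0) = 0"
proof -
  assume "\<xi> \<in> Pdual p"
  then have h: "\<forall>P\<in>Poly p. \<forall>c. \<xi> (\<lambda>x. c * P x) = c * \<xi> P" unfolding Pdual_def by blast
  show ?thesis using bspec[OF h Poly_zero[of p], THEN spec[of _ 0]] by simp
qed

lemma Pdual_add: "\<xi> \<in> Pdual p \<Longrightarrow> P \<in> Poly p \<Longrightarrow> Q \<in> Poly p \<Longrightarrow> \<xi> (\<lambda>x. P x + Q x) = \<xi> P + \<xi> Q"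
  unfolding Pdual_def by blast

lemma Pdual_scale: "\<xi> \<in> Pdual p \<Longrightarrow> P \<in> Poly p \<Longrightarrow> \<xi> (\<lambda>x. c * P x) = c * \<xi> P"
  unfolding Pdual_def by blast

lemma Pdual_off: "\<xi> \<in> Pdual p \<Longrightarrow> f \<notin> Poly p \<Longrightarrow> \<xi> f = 0"
  unfolding Pdual_def by blast

lemma Pdual_sum:
  assumes "\<xi> \<in> Pdual p" "finite I" "\<forall>i\<in>I. P i \<in> Poly p"
  shows "\<xi> (\<lambda>x. \<Sum>i\<in>I. d i * P i x) = (\<Sum>i\<in>I. d i * \<xi> (P i))"
  using assms(2,3)
proof (induction I rule: finite_induct)
  case empty then show ?case using Pdual_zero_fun[OF assms(1)] by simp
next
  case (insert j I)
  have PI: "(\<lambda>x. \<Sum>i\<in>I. d i * P i x) \<in> Poly p" using insert by (intro Poly_sum) auto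
  have Pj: "(\<lambda>x. d j * P j x) \<in> Poly p" using insert by (intro Poly_scale) auto
  have "\<xi> (\<lambda>x. \<Sum>i\<in>insert j I. d i * P i x) = \<xi> (\<lambda>x. d j * P j x + (\<Sum>i\<in>I. d i * P i x))"
    using insert by simp
  also have "\<dots> = \<xi> (\<lambda>x. d j * P j x) + \<xi> (\<lambda>x. \<Sum>i\<in>I. d i * P i x)"
    using Pdual_add[OF assms(1) Pj PI] by simp
  also have "\<xi> (\<lambda>x. d j * P j x) = d j * \<xi> (P j)"
    using Pdual_scale[OF assms(1)] insert by simp
  finally show ?case using insert by simp
qed

lemma Pdual_eval:
  assumes "\<xi> \<in> Pdual p" "f = (\<lambda>x. \<Sum>g\<in>mindex p. d g * Tm b g x)"
  shows "\<xi> f = (\<Sum>g\<in>mindex p. d g * \<xi> (Tm b g))"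
proof -
  have "\<forall>i\<in>mindex p. Tm b i \<in> Poly p" using Tm_Poly by blast
  from Pdual_sum[OF assms(1) finite_mindex[of p] this, where d=d] assms(2) show ?thesis by simp
qed

lemma Pdual_ext:
  assumes "\<xi> \<in> Pdual p" "\<eta> \<in> Pdual p" "\<forall>g\<in>mindex p. \<xi> (Tm b g) = \<eta> (Tm b g)"
  shows "\<xi> = \<eta>"
proof
  fix f
  show "\<xi> f = \<eta> f"
  proof (cases "f \<in> Poly p")
    case True
    then obtain d where d: "f = (\<lambda>x. \<Sum>g\<in>mindex p. d g * Tm b g x)" using Poly_rep by blast
    show ?thesis using Pdual_eval[OF assms(1) d] Pdual_eval[OF assms(2) d] assms(3) by simp
  next
    case False then show ?thesis using Pdual_off assms(1,2) by metis
  qed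
qed

definition Inv :: "nat \<Rightarrow> (real^'n::finite) set \<Rightarrow> ((real^'n) \<times> ((real^'n \<Rightarrow> real) \<Rightarrow> real)) set \<Rightarrow> bool" where
  "Inv p X E \<longleftrightarrow> (\<forall>a \<xi>. (a, \<xi>) \<in> E \<longrightarrow> a \<in> X \<and> \<xi> \<in> Pdual p) \<and> (\<forall>a\<in>X. (a, \<lambda>f. 0) \<in> E)
     \<and> (\<forall>a \<xi> \<eta> s t. (a, \<xi>) \<in> E \<longrightarrow> (a, \<eta>) \<in> E \<longrightarrow> (a, \<lambda>f. s * \<xi> f + t * \<eta> f) \<in> E)"

lemma Pdual_comb:
  assumes "\<xi> \<in> Pdual p" "\<eta> \<in> Pdual p"
  shows "(\<lambda>f. s * \<xi> f + t * \<eta> f) \<in> Pdual p"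
  using assms unfolding Pdual_def by (simp add: algebra_simps)

lemma Pdual_0: "(\<lambda>f. 0) \<in> Pdual p"
  unfolding Pdual_def by simp

lemma delta_Pdual: "delta p a \<in> Pdual p"
  unfolding Pdual_def delta_def by (simp add: Poly_add Poly_scale)

lemma Pdual_fsum: "finite F \<Longrightarrow> F \<subseteq> Pdual p \<Longrightarrow> (\<lambda>f. \<Sum>\<eta>\<in>F. c \<eta> * \<eta> f) \<in> Pdual p"
proof (induction F rule: finite_induct)
  case empty then show ?case using Pdual_0 by simp
next
  case (insert j F)
  then have "(\<lambda>f. c j * j f + 1 * (\<Sum>\<eta>\<in>F. c \<eta> * \<eta> f)) \<in> Pdual p"
    by (intro Pdual_comb) auto
  with insert show ?case by simp
qed

lemma fspan_Pdual: "S \<subseteq> Pdual p \<Longrightarrow> fspan S \<subseteq> Pdual p"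
  unfolding fspan_def using Pdual_fsum by blast

lemma fspan_single: "\<xi> \<in> S \<Longrightarrow> \<xi> \<in> fspan S"
  unfolding fspan_def by (intro CollectI exI[of _ "{\<xi>}"] exI[of _ "\<lambda>_. 1"]) auto

lemma fspan_zero: "(\<lambda>f. 0) \<in> fspan S"
  unfolding fspan_def by (intro CollectI exI[of _ "{}"] exI[of _ "\<lambda>_. 1"]) auto

lemma fspan_comb:
  assumes "v \<in> fspan S" "w \<in> fspan S"
  shows "(\<lambda>f. s * v f + t * w f) \<in> fspan S"
proof -
  obtain F1 c1 where 1: "finite F1" "F1 \<subseteq> S" "v = (\<lambda>f. \<Sum>\<eta>\<in>F1. c1 \<eta> * \<eta> f)"
    using assms(1) unfolding fspan_def by blast
  obtain F2 c2 where 2: "finite F2" "F2 \<subseteq> S" "w = (\<lambda>f. \<Sum>\<eta>\<in>F2. c2 \<eta> * \<eta> f)"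
    using assms(2) unfolding fspan_def by blast
  define c where "c \<eta> = s * (if \<eta> \<in> F1 then c1 \<eta> else 0) + t * (if \<eta> \<in> F2 then c2 \<eta> else 0)" for \<eta>
  have "(\<lambda>f. s * v f + t * w f) = (\<lambda>f. \<Sum>\<eta>\<in>F1 \<union> F2. c \<eta> * \<eta> f)"
  proof
    fix f
    have A: "(\<Sum>\<eta>\<in>F1 \<union> F2. (if \<eta> \<in> F1 then c1 \<eta> * \<eta> f else 0)) = (\<Sum>\<eta>\<in>F1. c1 \<eta> * \<eta> f)"
      using sum.inter_restrict[of "F1 \<union> F2" "\<lambda>\<eta>. c1 \<eta> * \<eta> f" F1] 1 2
      by (simp add: Int_absorb2)
    have B: "(\<Sum>\<eta>\<in>F1 \<union> F2. (if \<eta> \<in> F2 then c2 \<eta> * \<eta> f else 0)) = (\<Sum>\<eta>\<in>F2. c2 \<eta> * \<eta> f)"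
      using sum.inter_restrict[of "F1 \<union> F2" "\<lambda>\<eta>. c2 \<eta> * \<eta> f" F2] 1 2
      by (simp add: Int_absorb2)
    have "(\<Sum>\<eta>\<in>F1 \<union> F2. c \<eta> * \<eta> f) = (\<Sum>\<eta>\<in>F1 \<union> F2. s * (if \<eta> \<in> F1 then c1 \<eta> * \<eta> f else 0)
        + t * (if \<eta> \<in> F2 then c2 \<eta> * \<eta> f else 0))"
      by (rule sum.cong) (auto simp: c_def algebra_simps)
    also have "\<dots> = s * (\<Sum>\<eta>\<in>F1 \<union> F2. (if \<eta> \<in> F1 then c1 \<eta> * \<eta> f else 0))
        + t * (\<Sum>\<eta>\<in>F1 \<union> F2. (if \<eta> \<in> F2 then c2 \<eta> * \<eta> f else 0))"
      by (simp add: sum.distrib sum_distrib_left)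
    finally have "(\<Sum>\<eta>\<in>F1 \<union> F2. c \<eta> * \<eta> f) = s * (\<Sum>\<eta>\<in>F1 \<union> F2. (if \<eta> \<in> F1 then c1 \<eta> * \<eta> f else 0))
        + t * (\<Sum>\<eta>\<in>F1 \<union> F2. (if \<eta> \<in> F2 then c2 \<eta> * \<eta> f else 0))" .
    then show "s * v f + t * w f = (\<Sum>\<eta>\<in>F1 \<union> F2. c \<eta> * \<eta> f)" using A B 1 2 by simp
  qed
  then show ?thesis unfolding fspan_def using 1 2 by blast
qed

lemma Inv_E0: "Inv p X (E0 p X)"
  unfolding Inv_def E0_def
proof (intro conjI allI impI ballI)
  fix a \<xi> assume "(a, \<xi>) \<in> {(a, \<xi>). a \<in> X \<and> (\<exists>t. \<xi> = (\<lambda>P. t * delta p a P))}"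
  then obtain t where "a \<in> X" "\<xi> = (\<lambda>P. t * delta p a P)" by blast
  moreover have "(\<lambda>P. t * delta p a P + 0 * delta p a P) \<in> Pdual p"
    using delta_Pdual by (rule Pdual_comb) (rule delta_Pdual)
  ultimately show "a \<in> X" "\<xi> \<in> Pdual p" by auto
next
  fix a assume "a \<in> X"
  then show "(a, \<lambda>f. 0) \<in> {(a, \<xi>). a \<in> X \<and> (\<exists>t. \<xi> = (\<lambda>P. t * delta p a P))}"
    by (auto intro!: exI[of _ 0])
next
  fix a \<xi> \<eta> s t
  assume "(a, \<xi>) \<in> {(a, \<xi>). a \<in> X \<and> (\<exists>t. \<xi> = (\<lambda>P. t * delta p a P))}"
     "(a, \<eta>) \<in> {(a, \<xi>). a \<in> X \<and> (\<exists>t. \<xi> = (\<lambda>P. t * delta p a P))}"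
  then obtain t1 t2 where "a \<in> X" "\<xi> = (\<lambda>P. t1 * delta p a P)" "\<eta> = (\<lambda>P. t2 * delta p a P)" by blast
  then show "(a, \<lambda>f. s * \<xi> f + t * \<eta> f) \<in> {(a, \<xi>). a \<in> X \<and> (\<exists>t. \<xi> = (\<lambda>P. t * delta p a P))}"
    by (auto intro!: exI[of _ "s * t1 + t * t2"] simp: algebra_simps)
qed

lemma Inv_rho: "Inv p X E \<Longrightarrow> Inv p X (rho p X E)"
proof -
  assume I: "Inv p X E"
  have "fspan {\<eta>. (a, \<eta>) \<in> Eprime p X E} \<subseteq> Pdual p" for a
    by (rule fspan_Pdual) (auto simp: Eprime_def)
  then show ?thesis unfolding Inv_def rho_def
    by (auto simp: fspan_zero fspan_comb)
qed

lemma Inv_pow: "Inv p X ((rho p X ^^ k) (E0 p X))"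
  by (induction k) (simp_all add: Inv_E0 Inv_rho)

lemma Inv_sum:
  assumes "Inv p X E" "a \<in> X" "finite I" "\<forall>i\<in>I. (a, g i) \<in> E"
  shows "(a, \<lambda>f. \<Sum>i\<in>I. c i * g i f) \<in> E"
  using assms(3,4)
proof (induction I rule: finite_induct)
  case empty then show ?case using assms(1,2) unfolding Inv_def by simp
next
  case (insert j I)
  then have "(a, \<lambda>f. c j * g j f + 1 * (\<Sum>i\<in>I. c i * g i f)) \<in> E"
    using assms(1) unfolding Inv_def by blast
  with insert show ?case by simp
qed

lemma xi_at_zero: "xi_at (\<lambda>f. 0) \<alpha> b = 0"
  unfolding xi_at_def by simp

lemma rho_incl:
  assumes "Inv p X E" "(a, \<xi>) \<in> E"
  shows "(a, \<xi>) \<in> rho p X E"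
proof -
  have aX: "a \<in> X" and xP: "\<xi> \<in> Pdual p" using assms unfolding Inv_def by auto
  have z: "(a, \<lambda>f. 0) \<in> E" using assms aX unfolding Inv_def by auto
  have e: "fsum \<xi> (\<lambda>f. 0) = \<xi>" unfolding fsum_def by simp
  have "(a, a, fsum \<xi> (\<lambda>f. 0)) \<in> DeltaB p X E"
    unfolding DeltaB_def using aX assms(2) z by (force simp: xi_at_zero)
  then have "(a, a, \<xi>) \<in> DeltaB p X E" using e by simp
  then have "(a, a, \<xi>) \<in> closure (DeltaB p X E)" using closure_subset by blast
  then have "(a, \<xi>) \<in> Eprime p X E" unfolding Eprime_def using aX xP by simp
  then show ?thesis unfolding rho_def using aX by (auto intro: fspan_single)
qed

lemma mabs_upd: "mabs (\<beta>(i := v)) + \<beta> i = mabs \<beta> + v"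
proof -
  have "mabs (\<beta>(i := v)) = v + (\<Sum>j\<in>UNIV - {i}. \<beta> j)"
    unfolding mabs_def by (subst sum.remove[of UNIV i]) auto
  moreover have "mabs \<beta> = \<beta> i + (\<Sum>j\<in>UNIV - {i}. \<beta> j)"
    unfolding mabs_def by (subst sum.remove[of UNIV i]) auto
  ultimately show ?thesis by simp
qed

lemma mfact_ge1: "1 \<le> mfact \<alpha>"
  unfolding mfact_def by (rule prod_ge_1) simp

lemma mpow_zero: "mpow 0 g = (if g = (\<lambda>_. 0) then 1 else 0)"
proof (cases "g = (\<lambda>_. 0)")
  case True then show ?thesis by (simp add: mpow_def)
next
  case False
  then obtain j where "g j \<noteq> 0" by auto
  then have "mpow 0 g = 0" unfolding mpow_def by (intro prod_zero) (auto intro: exI[of _ j])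
  with False show ?thesis by simp
qed

lemma axis_comp: "(h *\<^sub>R axis i (1::real)) $ j = (if j = i then h else 0)"
  by (simp add: axis_def)

lemma Kc_axis:
  fixes h k :: real and \<beta> g :: "'n::finite \<Rightarrow> nat"
  assumes "h \<noteq> 0" "k \<noteq> 0"
  shows "(Kc g \<beta> (h *\<^sub>R axis i 1) - (if g = \<beta> then 1 else 0)) / (h * k) =
    (if (\<forall>j. j \<noteq> i \<longrightarrow> g j = \<beta> j) \<and> \<beta> i < g i then of_nat (g i choose \<beta> i) * h ^ (g i - \<beta> i - 1) / k else 0)"
proof -
  define Q where "Q = (\<Prod>j\<in>UNIV - {i}. of_nat (g j choose \<beta> j) * (0::real) ^ (g j - \<beta> j))"
  have K: "Kc g \<beta> (h *\<^sub>R axis i 1) = of_nat (g i choose \<beta> i) * h ^ (g i - \<beta> i) * Q"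
    unfolding Kc_def Q_def axis_comp
    by (subst prod.remove[of UNIV i]) (auto intro!: prod.cong)
  show ?thesis
  proof (cases "\<forall>j. j \<noteq> i \<longrightarrow> g j = \<beta> j")
    case True
    then have Q1: "Q = 1" unfolding Q_def by (intro prod.neutral) auto
    consider "g i < \<beta> i" | "g i = \<beta> i" | "\<beta> i < g i" by linarith
    then show ?thesis
    proof cases
      case 1
      then have "g \<noteq> \<beta>" by auto
      with 1 show ?thesis using K Q1 by simp
    next
      case 2
      then have "g = \<beta>" using True by auto
      then show ?thesis using K Q1 by simp
    next
      case 3
      then have "g \<noteq> \<beta>" by auto
      have "h ^ (g i - \<beta> i) = h * h ^ (g i - \<beta> i - 1)" using 3
        by (metis Suc_diff_Suc diff_Suc_1 diff_commute power_Suc)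
      with 3 True \<open>g \<noteq> \<beta>\<close> show ?thesis using K Q1 assms by (simp add: field_simps)
    qed
  next
    case False
    then obtain j where j: "j \<noteq> i" "g j \<noteq> \<beta> j" by auto
    have "Q = 0" unfolding Q_def
    proof (rule prod_zero)
      show "finite (UNIV - {i})" by simp
      show "\<exists>a\<in>UNIV - {i}. of_nat (g a choose \<beta> a) * (0::real) ^ (g a - \<beta> a) = 0"
        using j by (intro bexI[of _ j]) (auto simp: not_less_eq linorder_neq_iff)
    qed
    moreover have "g \<noteq> \<beta>" using j by auto
    ultimately show ?thesis using K False j by auto
  qed
qed

lemma Kc_lim:
  fixes hs :: "nat \<Rightarrow> real" and \<beta> g :: "'n::finite \<Rightarrow> nat"
  assumes "hs \<longlonglongrightarrow> 0" "\<forall>m. hs m \<noteq> 0"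
  shows "(\<lambda>m. (Kc g \<beta> (hs m *\<^sub>R axis i 1) - (if g = \<beta> then 1 else 0)) / (hs m * real (Suc (\<beta> i))))
     \<longlonglongrightarrow> (if g = \<beta>(i := Suc (\<beta> i)) then 1 else 0)"
proof -
  let ?k = "real (Suc (\<beta> i))"
  let ?c = "(\<forall>j. j \<noteq> i \<longrightarrow> g j = \<beta> j) \<and> \<beta> i < g i"
  have eq: "(\<lambda>m. (Kc g \<beta> (hs m *\<^sub>R axis i 1) - (if g = \<beta> then 1 else 0)) / (hs m * ?k))
     = (\<lambda>m. if ?c then of_nat (g i choose \<beta> i) * hs m ^ (g i - \<beta> i - 1) / ?k else 0)"
  proof
    fix m
    have k0: "?k \<noteq> 0" by (simp only: of_nat_eq_0_iff)
    show "(Kc g \<beta> (hs m *\<^sub>R axis i 1) - (if g = \<beta> then 1 else 0)) / (hs m * ?k)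
     = (if ?c then of_nat (g i choose \<beta> i) * hs m ^ (g i - \<beta> i - 1) / ?k else 0)"
      using Kc_axis[OF _ k0, of "hs m" g \<beta> i] assms(2) by blast
  qed
  show ?thesis
  proof (cases "?c")
    case c: True
    show ?thesis
    proof (cases "g i = Suc (\<beta> i)")
      case True
      then have "g = \<beta>(i := Suc (\<beta> i))" using c by auto
      moreover have "of_nat (g i choose \<beta> i) * hs m ^ (g i - \<beta> i - 1) / ?k = 1" for m
        using True by (simp add: binomial_Suc_n)
      ultimately show ?thesis unfolding eq using c by simp
    next
      case False
      then have "g \<noteq> \<beta>(i := Suc (\<beta> i))" by (metis fun_upd_same)
      moreover have "(\<lambda>m. of_nat (g i choose \<beta> i) * hs m ^ (g i - \<beta> i - 1) / ?k) \<longlonglongrightarrow>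
          of_nat (g i choose \<beta> i) * 0 ^ (g i - \<beta> i - 1) / ?k"
        by (intro tendsto_intros assms(1)) (simp only: of_nat_eq_0_iff)
      moreover have "(0::real) ^ (g i - \<beta> i - 1) = 0" using c False by simp
      ultimately show ?thesis unfolding eq using c assms(1) by simp
    qed
  next
    case False
    then have "g \<noteq> \<beta>(i := Suc (\<beta> i))" by auto
    moreover have "(\<lambda>m. if ?c then of_nat (g i choose \<beta> i) * hs m ^ (g i - \<beta> i - 1) / ?k else 0) = (\<lambda>m. 0)"
      by (rule ext) (rule if_not_P[OF False])
    ultimately show ?thesis unfolding eq by simp
  qed
qed

lemma Inv_scale: "Inv p X E \<Longrightarrow> (a, \<xi>) \<in> E \<Longrightarrow> (a, \<lambda>f. c * \<xi> f) \<in> E"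
proof -
  assume "Inv p X E" "(a, \<xi>) \<in> E"
  then have "(a, \<lambda>f. c * \<xi> f + 0 * \<xi> f) \<in> E" unfolding Inv_def by blast
  then show ?thesis by simp
qed

lemma tendsto_fun:
  fixes F :: "'a \<Rightarrow> 'b \<Rightarrow> 'c::topological_space"
  assumes "\<And>x. ((\<lambda>m. F m x) \<longlongrightarrow> G x) net"
  shows "(F \<longlongrightarrow> G) net"
proof -
  have "limitin (product_topology (\<lambda>i. euclidean) UNIV) F G net"
    using assms by (subst limitin_componentwise) auto
  then show ?thesis by (simp add: euclidean_product_topology)
qed

lemma step:
  fixes a :: "real^'n::finite"
  assumes I: "Inv p X E" and a: "a \<in> interior X" and \<beta>: "\<beta> \<in> mindex p"
    and \<beta>': "\<beta>(i := Suc (\<beta> i)) \<in> mindex p"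
    and hyp: "\<forall>b\<in>interior X. \<exists>\<xi>. (b, \<xi>) \<in> E \<and> (\<forall>g\<in>mindex p. \<xi> (Tm b g) = (if g = \<beta> then 1 else 0))"
  shows "\<exists>\<zeta>. \<zeta> \<in> Pdual p \<and> (a, a, \<zeta>) \<in> closure (DeltaB p X E) \<and>
           (\<forall>g\<in>mindex p. \<zeta> (Tm a g) = (if g = \<beta>(i := Suc (\<beta> i)) then 1 else 0))"
proof -
  define \<epsilon> where "\<epsilon> b = (SOME \<xi>. (b, \<xi>) \<in> E \<and> (\<forall>g\<in>mindex p. \<xi> (Tm b g) = (if g = \<beta> then 1 else 0)))" for b
  have \<epsilon>: "(b, \<epsilon> b) \<in> E \<and> (\<forall>g\<in>mindex p. \<epsilon> b (Tm b g) = (if g = \<beta> then 1 else 0))" if "b \<in> interior X" for b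
    using someI_ex[OF hyp[rule_format, OF that]] unfolding \<epsilon>_def by blast
  have \<epsilon>P: "\<epsilon> b \<in> Pdual p" if "b \<in> interior X" for b using \<epsilon>[OF that] I unfolding Inv_def by blast
  obtain r where r: "r > 0" "ball a r \<subseteq> interior X" using a open_interior open_contains_ball by blast
  define s where "s = min 1 (r/2)"
  have s: "0 < s" "s \<le> 1" "s < r" using r by (auto simp: s_def)
  define h where "h m = s / real (Suc m)" for m
  have h: "0 < h m" "h m \<le> s" for m
    using s by (auto simp: h_def divide_le_eq)
  have h1: "h m \<le> 1" "h m < r" for m using h[of m] s by auto
  have hlim: "h \<longlonglongrightarrow> 0"
    unfolding h_def using LIMSEQ_Suc[OF lim_const_over_n[of s]] by simp
  define b where "b m = a + h m *\<^sub>R axis i 1" for m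
  have db: "dist a (b m) = h m" for m
    unfolding b_def dist_norm using h[of m] by simp
  have bX: "b m \<in> interior X" for m
    using r(2) db[of m] h1[of m] by (auto simp: dist_commute)
  have aX: "a \<in> X" "a \<in> interior X" using a interior_subset by auto
  define k where "k = real (Suc (\<beta> i))"
  have k: "k \<ge> 1" unfolding k_def by simp
  define \<zeta>s where "\<zeta>s m = (\<lambda>f. (\<epsilon> (b m) f - \<epsilon> a f) / (h m * k))" for m

  have mabs\<beta>: "Suc (mabs \<beta>) \<le> p"
    using \<beta>' mabs_upd[of \<beta> i "Suc (\<beta> i)"] by (simp add: mindex_def)

  have A: "(a, b m, \<zeta>s m) \<in> DeltaB p X E" for m
  proof -
    define \<xi>1 where "\<xi>1 = (\<lambda>f. (- 1 / (h m * k)) * \<epsilon> a f)"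
    define \<eta>1 where "\<eta>1 = (\<lambda>f. (1 / (h m * k)) * \<epsilon> (b m) f)"
    have 1: "(a, \<xi>1) \<in> E" unfolding \<xi>1_def using Inv_scale[OF I] \<epsilon>[OF aX(2)] by blast
    have 2: "(b m, \<eta>1) \<in> E" unfolding \<eta>1_def using Inv_scale[OF I] \<epsilon>[OF bX] by blast
    have hk: "h m * k \<noteq> 0" using h[of m] k by auto
    have 3: "\<zeta>s m = fsum \<xi>1 \<eta>1"
      unfolding fsum_def \<xi>1_def \<eta>1_def \<zeta>s_def using hk
      by (auto simp: fun_eq_iff field_simps)
    have 4: "dist a (b m) ^ (p - mabs \<alpha>) * \<bar>xi_at \<eta>1 \<alpha> (b m)\<bar> \<le> 1" if \<alpha>: "\<alpha> \<in> mindex p" for \<alpha>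
    proof -
      have fe: "(\<lambda>x. mpow (x - b m) \<alpha> / mfact \<alpha>) = (\<lambda>x. (1 / mfact \<alpha>) * Tm (b m) \<alpha> x)"
        by (simp add: Tm_def fun_eq_iff)
      have "xi_at \<eta>1 \<alpha> (b m) = (1 / (h m * k)) * \<epsilon> (b m) (\<lambda>x. (1 / mfact \<alpha>) * Tm (b m) \<alpha> x)"
        by (simp only: xi_at_def \<eta>1_def fe)
      also have "\<dots> = (1 / (h m * k)) * ((1 / mfact \<alpha>) * \<epsilon> (b m) (Tm (b m) \<alpha>))"
        by (simp only: Pdual_scale[OF \<epsilon>P[OF bX] Tm_Poly[OF \<alpha>]])
      finally have "xi_at \<eta>1 \<alpha> (b m) = (1 / (h m * k)) * ((1 / mfact \<alpha>) * \<epsilon> (b m) (Tm (b m) \<alpha>))" .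
      also have "\<dots> = (if \<alpha> = \<beta> then 1 / (h m * k * mfact \<alpha>) else 0)"
        using \<epsilon>[OF bX] \<alpha> by simp
      finally have xa: "xi_at \<eta>1 \<alpha> (b m) = (if \<alpha> = \<beta> then 1 / (h m * k * mfact \<alpha>) else 0)" .
      show ?thesis
      proof (cases "\<alpha> = \<beta>")
        case False then show ?thesis using xa by simp
      next
        case True
        have e: "p - mabs \<beta> = Suc (p - mabs \<beta> - 1)" using mabs\<beta> by simp
        have "h m ^ (p - mabs \<beta>) = h m * h m ^ (p - mabs \<beta> - 1)" by (subst e) simp
        also have "\<dots> \<le> h m * 1"
          using h[of m] h1[of m] by (intro mult_left_mono power_le_one) auto
        finally have hp: "h m ^ (p - mabs \<beta>) \<le> h m" by simp
        have mf: "1 \<le> mfact \<beta>" by (rule mfact_ge1)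
        have "dist a (b m) ^ (p - mabs \<alpha>) * \<bar>xi_at \<eta>1 \<alpha> (b m)\<bar> = h m ^ (p - mabs \<beta>) / (h m * k * mfact \<beta>)"
          using True xa db h[of m] k mf by simp
        also have "\<dots> \<le> h m / (h m * k * mfact \<beta>)"
          using hp h[of m] k mf by (intro divide_right_mono) auto
        also have "\<dots> = 1 / (k * mfact \<beta>)" using h[of m] by simp
        also have "\<dots> \<le> 1" using k mf
          by (simp add: divide_le_eq) (metis mult_mono' mult_1_left order_trans zero_le_one)
        finally show ?thesis .
      qed
    qed
    have bX': "b m \<in> X" using bX[of m] interior_subset by blast
    show ?thesis unfolding DeltaB_def
      apply (simp only: mem_Collect_eq case_prod_conv)
      apply (intro conjI aX(1) bX')
      apply (rule exI[of _ \<xi>1], rule exI[of _ \<eta>1])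
      using 1 2 3 4 by blast
  qed

  have Bv: "\<zeta>s m (Tm a g) = (Kc g \<beta> (h m *\<^sub>R axis i 1) - (if g = \<beta> then 1 else 0)) / (h m * k)"
    if g: "g \<in> mindex p" for m g
  proof -
    have "Tm a g = (\<lambda>x. \<Sum>d\<in>mindex p. Kc g d (h m *\<^sub>R axis i 1) * Tm (b m) d x)"
    proof
      fix x
      have "x - a = (x - b m) + h m *\<^sub>R axis i 1" unfolding b_def by simp
      then show "Tm a g x = (\<Sum>d\<in>mindex p. Kc g d (h m *\<^sub>R axis i 1) * Tm (b m) d x)"
        unfolding Tm_def using expand[OF g, of "x - b m" "h m *\<^sub>R axis i 1"] by metis
    qed
    then have "\<epsilon> (b m) (Tm a g) = (\<Sum>d\<in>mindex p. Kc g d (h m *\<^sub>R axis i 1) * \<epsilon> (b m) (Tm (b m) d))"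
      by (rule Pdual_eval[OF \<epsilon>P[OF bX]])
    also have "\<dots> = (\<Sum>d\<in>mindex p. if d = \<beta> then Kc g d (h m *\<^sub>R axis i 1) else 0)"
      using \<epsilon>[OF bX] by (intro sum.cong) auto
    also have "\<dots> = Kc g \<beta> (h m *\<^sub>R axis i 1)" using \<beta> by (simp add: finite_mindex)
    finally show ?thesis unfolding \<zeta>s_def using \<epsilon>[OF aX(2)] g by simp
  qed
  have B: "(\<lambda>m. \<zeta>s m (Tm a g)) \<longlonglongrightarrow> (if g = \<beta>(i := Suc (\<beta> i)) then 1 else 0)"
    if g: "g \<in> mindex p" for g
  proof -
    have hn0: "\<forall>m. h m \<noteq> 0" using h by (metis less_irrefl)
    show ?thesis unfolding Bv[OF g] k_def by (rule Kc_lim[OF hlim hn0])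
  qed

  have lin: "\<zeta>s m f = (\<Sum>g\<in>mindex p. d g * \<zeta>s m (Tm a g))"
    if "f = (\<lambda>x. \<Sum>g\<in>mindex p. d g * Tm a g x)" for m f d
  proof -
    have "\<epsilon> (b m) f = (\<Sum>g\<in>mindex p. d g * \<epsilon> (b m) (Tm a g))"
      by (rule Pdual_eval[OF \<epsilon>P[OF bX] that])
    moreover have "\<epsilon> a f = (\<Sum>g\<in>mindex p. d g * \<epsilon> a (Tm a g))"
      by (rule Pdual_eval[OF \<epsilon>P[OF aX(2)] that])
    ultimately show ?thesis unfolding \<zeta>s_def
      by (simp add: sum_subtractf[symmetric] sum_divide_distrib right_diff_distrib)
  qed
  have off: "\<zeta>s m f = 0" if "f \<notin> Poly p" for m f
    unfolding \<zeta>s_def using Pdual_off[OF \<epsilon>P[OF bX] that] Pdual_off[OF \<epsilon>P[OF aX(2)] that] by simp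
  have conv: "\<exists>L. (\<lambda>m. \<zeta>s m f) \<longlonglongrightarrow> L" for f
  proof (cases "f \<in> Poly p")
    case True
    then obtain d where d: "f = (\<lambda>x. \<Sum>g\<in>mindex p. d g * Tm a g x)" using Poly_rep by blast
    have "(\<lambda>m. \<Sum>g\<in>mindex p. d g * \<zeta>s m (Tm a g)) \<longlonglongrightarrow>
          (\<Sum>g\<in>mindex p. d g * (if g = \<beta>(i := Suc (\<beta> i)) then 1 else 0))"
      by (intro tendsto_sum tendsto_mult tendsto_const B)
    then show ?thesis using lin[OF d] by auto
  next
    case False then show ?thesis using off by auto
  qed
  define \<zeta> where "\<zeta> f = lim (\<lambda>m. \<zeta>s m f)" for f
  have cz: "(\<lambda>m. \<zeta>s m f) \<longlonglongrightarrow> \<zeta> f" for f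
    using conv[of f] limI unfolding \<zeta>_def by metis
  have zT: "\<zeta> (Tm a g) = (if g = \<beta>(i := Suc (\<beta> i)) then 1 else 0)" if "g \<in> mindex p" for g
    using LIMSEQ_unique[OF cz B[OF that]] .
  have zP: "\<zeta> \<in> Pdual p"
    unfolding Pdual_def
  proof (intro CollectI conjI ballI allI impI)
    fix P Q :: "real^'n \<Rightarrow> real" assume P: "P \<in> Poly p" and Q: "Q \<in> Poly p"
    have "\<zeta>s m (\<lambda>x. P x + Q x) = \<zeta>s m P + \<zeta>s m Q" for m
      unfolding \<zeta>s_def using Pdual_add[OF \<epsilon>P[OF bX] P Q] Pdual_add[OF \<epsilon>P[OF aX(2)] P Q]
      by (simp add: add_divide_distrib[symmetric])
    then have "(\<lambda>m. \<zeta>s m (\<lambda>x. P x + Q x)) \<longlonglongrightarrow> \<zeta> P + \<zeta> Q"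
      using tendsto_add[OF cz[of P] cz[of Q]] by simp
    then show "\<zeta> (\<lambda>x. P x + Q x) = \<zeta> P + \<zeta> Q" using LIMSEQ_unique[OF cz] by blast
  next
    fix P :: "real^'n \<Rightarrow> real" and c :: real assume P: "P \<in> Poly p"
    have "\<zeta>s m (\<lambda>x. c * P x) = c * \<zeta>s m P" for m
      unfolding \<zeta>s_def using Pdual_scale[OF \<epsilon>P[OF bX] P] Pdual_scale[OF \<epsilon>P[OF aX(2)] P]
      by (simp add: right_diff_distrib)
    then have "(\<lambda>m. \<zeta>s m (\<lambda>x. c * P x)) \<longlonglongrightarrow> c * \<zeta> P"
      using tendsto_mult[OF tendsto_const cz[of P]] by simp
    then show "\<zeta> (\<lambda>x. c * P x) = c * \<zeta> P" using LIMSEQ_unique[OF cz] by blast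
  next
    fix f :: "real^'n \<Rightarrow> real" assume "f \<notin> Poly p"
    then have "(\<lambda>m. \<zeta>s m f) \<longlonglongrightarrow> 0" using off by simp
    then show "\<zeta> f = 0" using LIMSEQ_unique[OF cz] by blast
  qed
  have zlim: "\<zeta>s \<longlonglongrightarrow> \<zeta>" by (rule tendsto_fun) (rule cz)
  have blim: "b \<longlonglongrightarrow> a"
  proof -
    have "(\<lambda>m. a + h m *\<^sub>R axis i 1) \<longlonglongrightarrow> a + 0 *\<^sub>R axis i (1::real)"
      by (intro tendsto_intros hlim)
    then show ?thesis unfolding b_def by simp
  qed
  have "(\<lambda>m. (a, b m, \<zeta>s m)) \<longlonglongrightarrow> (a, a, \<zeta>)"
    by (intro tendsto_Pair tendsto_const blim zlim)
  moreover have ev: "eventually (\<lambda>m. (a, b m, \<zeta>s m) \<in> closure (DeltaB p X E)) sequentially"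
    using A closure_subset by (intro always_eventually) blast
  ultimately have "(a, a, \<zeta>) \<in> closure (DeltaB p X E)"
    by (intro Lim_in_closed_set[OF closed_closure ev trivial_limit_sequentially])
  then show ?thesis using zP zT by blast
qed

lemma DeltaB_self:
  assumes "Inv p X E" "(a, \<xi>) \<in> E"
  shows "(a, a, \<xi>) \<in> DeltaB p X E"
proof -
  have aX: "a \<in> X" using assms unfolding Inv_def by auto
  have z: "(a, \<lambda>f. 0) \<in> E" using assms aX unfolding Inv_def by auto
  have e: "fsum \<xi> (\<lambda>f. 0) = \<xi>" unfolding fsum_def by simp
  have "(a, a, fsum \<xi> (\<lambda>f. 0)) \<in> DeltaB p X E"
    unfolding DeltaB_def using aX assms(2) z by (force simp: xi_at_zero)
  then show ?thesis using e by simp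
qed

lemma Eprime_rho:
  assumes "a \<in> X" "\<zeta> \<in> Pdual p" "(a, a, \<zeta>) \<in> closure (DeltaB p X E)"
  shows "(a, \<zeta>) \<in> rho p X E"
proof -
  have "(a, \<zeta>) \<in> Eprime p X E" unfolding Eprime_def using assms by simp
  then show ?thesis unfolding rho_def using assms(1) by (auto intro: fspan_single)
qed

lemma mabs_zero: "mabs (\<lambda>_::'n::finite. 0) = 0"
  unfolding mabs_def by simp

lemma card_mindex: "Suc p \<le> card (mindex p :: ('n::finite \<Rightarrow> nat) set)"
proof -
  define f where "f j = (\<lambda>_::'n. 0::nat)(undefined := j)" for j
  have "inj_on f {..p}" unfolding f_def inj_on_def by (metis fun_upd_same)
  moreover have "f ` {..p} \<subseteq> mindex p"
  proof
    fix y assume "y \<in> f ` {..p}"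
    then obtain j where j: "j \<le> p" "y = f j" by auto
    have "mabs (f j) = j" unfolding f_def using mabs_upd[of "\<lambda>_::'n. 0::nat" undefined j] mabs_zero
      by simp
    then show "y \<in> mindex p" using j by (simp add: mindex_def)
  qed
  ultimately have "card {..p} \<le> card (mindex p :: ('n \<Rightarrow> nat) set)"
    using card_inj_on_le finite_mindex by blast
  then show ?thesis by simp
qed

lemma mabs_eq0: "mabs \<beta> = 0 \<Longrightarrow> \<beta> = (\<lambda>_. 0)"
  unfolding mabs_def by (auto simp: fun_eq_iff)

theorem lemma4p20:
  fixes X U :: "(real^'n::finite) set" and p :: nat
  assumes "open U" and "X \<subseteq> U" and "X = U \<inter> closure (interior X)"
  shows "tau p X = X \<times> Pdual p"
proof -
  define F where "F k = (rho p X ^^ k) (E0 p X)" for k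
  have FI: "Inv p X (F k)" for k unfolding F_def by (rule Inv_pow)
  have FS: "F (Suc k) = rho p X (F k)" for k by (simp add: F_def)
  have S: "\<forall>a\<in>interior X. \<forall>\<beta>\<in>mindex p. mabs \<beta> \<le> k \<longrightarrow>
      (\<exists>\<xi>. (a, \<xi>) \<in> F k \<and> (\<forall>g\<in>mindex p. \<xi> (Tm a g) = (if g = \<beta> then 1 else 0)))" for k
  proof (induction k)
    case 0
    show ?case
    proof (intro ballI impI)
      fix a :: "real^'n" and \<beta> :: "'n \<Rightarrow> nat" assume a: "a \<in> interior X" and "\<beta> \<in> mindex p" and m: "mabs \<beta> \<le> 0"
      then have \<beta>0: "\<beta> = (\<lambda>_. 0)" using mabs_eq0 by simp
      have aX: "a \<in> X" using a interior_subset by blast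
      have "(a, \<lambda>P. 1 * delta p a P) \<in> F 0" unfolding F_def E0_def using aX by (auto intro!: exI[of _ 1])
      moreover have "\<forall>g\<in>mindex p. (\<lambda>P. 1 * delta p a P) (Tm a g) = (if g = \<beta> then 1 else 0)"
      proof
        fix g :: "'n \<Rightarrow> nat" assume g: "g \<in> mindex p"
        have "delta p a (Tm a g) = Tm a g a" using Tm_Poly[OF g] by (simp add: delta_def)
        also have "\<dots> = (if g = \<beta> then 1 else 0)" by (simp add: Tm_def mpow_zero \<beta>0)
        finally show "(\<lambda>P. 1 * delta p a P) (Tm a g) = (if g = \<beta> then 1 else 0)" by simp
      qed
      ultimately show "\<exists>\<xi>. (a, \<xi>) \<in> F 0 \<and> (\<forall>g\<in>mindex p. \<xi> (Tm a g) = (if g = \<beta> then 1 else 0))"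
        by blast
    qed
  next
    case (Suc k)
    show ?case
    proof (intro ballI impI)
      fix a :: "real^'n" and \<beta> :: "'n \<Rightarrow> nat" assume a: "a \<in> interior X" and \<beta>: "\<beta> \<in> mindex p" and m: "mabs \<beta> \<le> Suc k"
      have aX: "a \<in> X" using a interior_subset by blast
      show "\<exists>\<xi>. (a, \<xi>) \<in> F (Suc k) \<and> (\<forall>g\<in>mindex p. \<xi> (Tm a g) = (if g = \<beta> then 1 else 0))"
      proof (cases "mabs \<beta> \<le> k")
        case True
        then obtain \<xi> where "(a, \<xi>) \<in> F k" "\<forall>g\<in>mindex p. \<xi> (Tm a g) = (if g = \<beta> then 1 else 0)"
          using Suc a \<beta> by blast
        then show ?thesis using rho_incl[OF FI] FS by blast
      next
        case False
        then have mb: "mabs \<beta> = Suc k" using m by simp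
        have "\<exists>i. \<beta> i > 0"
        proof (rule ccontr)
          assume "\<not> (\<exists>i. \<beta> i > 0)"
          then have "\<beta> = (\<lambda>_. 0)" by (auto simp: fun_eq_iff)
          then show False using mb by (simp add: mabs_def)
        qed
        then obtain i where i: "\<beta> i > 0" by blast
        define \<beta>0 where "\<beta>0 = \<beta>(i := \<beta> i - 1)"
        have eq: "\<beta> = \<beta>0(i := Suc (\<beta>0 i))" unfolding \<beta>0_def using i by (auto simp: fun_eq_iff)
        have "mabs \<beta>0 + \<beta> i = mabs \<beta> + (\<beta> i - 1)" unfolding \<beta>0_def by (rule mabs_upd)
        then have m0: "mabs \<beta>0 = k" using mb i by simp
        have \<beta>0m: "\<beta>0 \<in> mindex p" using \<beta> m0 mb by (simp add: mindex_def)
        have hyp: "\<forall>b\<in>interior X. \<exists>\<xi>. (b, \<xi>) \<in> F k \<and> (\<forall>g\<in>mindex p. \<xi> (Tm b g) = (if g = \<beta>0 then 1 else 0))"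
          using Suc \<beta>0m m0 by blast
        have \<beta>': "\<beta>0(i := Suc (\<beta>0 i)) \<in> mindex p" using \<beta> eq by simp
        obtain \<zeta> where z: "\<zeta> \<in> Pdual p" "(a, a, \<zeta>) \<in> closure (DeltaB p X (F k))"
          "\<forall>g\<in>mindex p. \<zeta> (Tm a g) = (if g = \<beta>0(i := Suc (\<beta>0 i)) then 1 else 0)"
          using step[OF FI a \<beta>0m \<beta>' hyp] by blast
        have "(a, \<zeta>) \<in> F (Suc k)" using Eprime_rho[OF aX z(1,2)] FS by simp
        then show ?thesis using z(3) eq by metis
      qed
    qed
  qed
  have full_int: "(c, \<psi>) \<in> F p" if c: "c \<in> interior X" and \<psi>: "\<psi> \<in> Pdual p" for c \<psi>
  proof -
    have cX: "c \<in> X" using c interior_subset by blast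
    define \<epsilon> where "\<epsilon> \<beta> = (SOME \<xi>. (c, \<xi>) \<in> F p \<and> (\<forall>g\<in>mindex p. \<xi> (Tm c g) = (if g = \<beta> then 1 else 0)))" for \<beta> :: "'n \<Rightarrow> nat"
    have \<epsilon>: "(c, \<epsilon> \<beta>) \<in> F p \<and> (\<forall>g\<in>mindex p. \<epsilon> \<beta> (Tm c g) = (if g = \<beta> then 1 else 0))"
      if "\<beta> \<in> mindex p" for \<beta> :: "'n \<Rightarrow> nat"
    proof -
      have "mabs \<beta> \<le> p" using that by (simp add: mindex_def)
      then have "\<exists>\<xi>. (c, \<xi>) \<in> F p \<and> (\<forall>g\<in>mindex p. \<xi> (Tm c g) = (if g = \<beta> then 1 else 0))"
        using S[of p] c that by blast
      then show ?thesis unfolding \<epsilon>_def by (rule someI_ex)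
    qed
    define R where "R = (\<lambda>f. \<Sum>\<beta>\<in>mindex p. \<psi> (Tm c \<beta>) * \<epsilon> \<beta> f)"
    have RF: "(c, R) \<in> F p" unfolding R_def
      by (rule Inv_sum[OF FI cX finite_mindex]) (use \<epsilon> in blast)
    then have RP: "R \<in> Pdual p" using FI unfolding Inv_def by blast
    have "\<psi> = R"
    proof (rule Pdual_ext[OF \<psi> RP])
      show "\<forall>g\<in>mindex p. \<psi> (Tm c g) = R (Tm c g)"
      proof
        fix g :: "'n \<Rightarrow> nat" assume g: "g \<in> mindex p"
        have "R (Tm c g) = (\<Sum>\<beta>\<in>mindex p. if \<beta> = g then \<psi> (Tm c \<beta>) else 0)"
          unfolding R_def using \<epsilon> g by (intro sum.cong) fastforce+
        also have "\<dots> = \<psi> (Tm c g)" using g by (simp add: finite_mindex)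
        finally show "\<psi> (Tm c g) = R (Tm c g)" by simp
      qed
    qed
    then show ?thesis using RF by simp
  qed
  have full: "(a, \<psi>) \<in> F (Suc p)" if a: "a \<in> X" and \<psi>: "\<psi> \<in> Pdual p" for a \<psi>
  proof -
    have "a \<in> closure (interior X)" using a assms(3) by blast
    then obtain x :: "nat \<Rightarrow> real^'n" where x: "\<forall>n. x n \<in> interior X" "x \<longlonglongrightarrow> a"
      unfolding closure_sequential by blast
    have ev: "eventually (\<lambda>m. (x m, x m, \<psi>) \<in> closure (DeltaB p X (F p))) sequentially"
      using DeltaB_self[OF FI full_int[OF _ \<psi>]] x(1) closure_subset by (intro always_eventually) blast
    have "(\<lambda>m. (x m, x m, \<psi>)) \<longlonglongrightarrow> (a, a, \<psi>)"
      by (intro tendsto_Pair tendsto_const x(2))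
    then have "(a, a, \<psi>) \<in> closure (DeltaB p X (F p))"
      by (intro Lim_in_closed_set[OF closed_closure ev trivial_limit_sequentially])
    then show ?thesis using Eprime_rho[OF a \<psi>] FS by simp
  qed
  have later: "X \<times> Pdual p \<subseteq> F k" if "Suc p \<le> k" for k
    using that
  proof (induction k rule: dec_induct)
    case base then show ?case using full by auto
  next
    case (step k) then show ?case using rho_incl[OF FI] FS by auto
  qed
  have r: "Suc p \<le> 2 * rdim p TYPE('n)"
    using card_mindex[of p, where 'n='n] unfolding rdim_def by simp
  have "tau p X = F (2 * rdim p TYPE('n))" unfolding tau_def F_def ..
  moreover have "F (2 * rdim p TYPE('n)) \<subseteq> X \<times> Pdual p" using FI unfolding Inv_def by auto
  ultimately show ?thesis using later[OF r] by auto
qed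

end
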